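(* Let $n,d,\ell\ge1$ be integers, $k$ an even positive integer, and $\mathcal{Q}$ a partition of $\mathcal{I}=\{(j,s): j\in[2\ell], s\in[d]\}$ with $|\mathcal{Q}|$ classes. For any $\mathcal{Q}$-valid collection $\{I_j\}_{j=1}^{2\ell}$ of tuples in $[n]^{kd/2}$, the number of collections $\{\sigma_j\}_{j=1}^{2\ell}$ of permutations in $\mathbb{S}_{kd/2}$ with $\mathrm{Par}(\{I_j\},\{\mathrm{id}\},\{\sigma_j\})=\mathcal{Q}$ is at most $$(kd/2)^{k|\mathcal{Q}|/2}\cdot\prod_{j=1}^{2\ell}\mathrm{hist}(I_j)!.$$
   Context: For a tuple $I=(i_1,\dots,i_q)\in[n]^q$, $\mathrm{hist}(I)=(\alpha_1,\dots,\alpha_n)$ where $\alpha_i$ is the number of times $i$ appears in $I$, and $\mathrm{hist}(I)!:=\prod_{i=1}^n\alpha_i!$ (with $0!=1$). For $\pi\in\mathbb{S}_q$ (permutations of $[q]$), $\pi(I):=(i_{\pi(1)},\dots,i_{\pi(q)})$. A tuple in $[n]^{kd/2}$ is viewed as a concatenation of $d$ consecutive blocks, each in $[n]^{k/2}$. Given $I_1,\dots,I_{2\ell}\in[n]^{kd/2}$ (indices modulo $2\ell$, $I_{2\ell+1}=I_1$) and $\pi_j,\sigma_j\in\mathbb{S}_{kd/2}$, let $A_{j,s}$ be the $s$-th block of $\pi_j(I_j)$ and $B_{j,s}$ the $s$-th block of $\sigma_j(I_{j+1})$. $\mathrm{Par}(\{I_j\},\{\pi_j\},\{\sigma_j\})$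 is the partition of $\mathcal{I}$ into classes of the relation $(j,s)\sim(j',s')$ iff $(A_{j,s},B_{j,s})=(A_{j',s'},B_{j',s'})$ or $(A_{j,s},B_{j,s})=(B_{j',s'},A_{j',s'})$. $\{\mathrm{id}\}$ means all $\pi_j$ equal the identity. A collection $\{I_j\}$ is called $\mathcal{Q}$-valid if there exist $\{\sigma_j\}$ with $\mathrm{Par}(\{I_j\},\{\mathrm{id}\},\{\sigma_j\})=\mathcal{Q}$. *)

theory Defs
  imports "HOL-Combinatorics.Permutations"
begin

(* Conventions: positions and indices are 0-based.
   j \<in> {0..<2l} indexes the tuples I_j, s \<in> {0..<d} indexes blocks,
   tuple entries range over [n] = {1..n}. Tuples are lists of length k*d/2. *)

definition hist_fact :: "nat \<Rightarrow> nat list \<Rightarrow> nat" where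
  "hist_fact n I = (\<Prod>i\<in>{1..n}. fact (count_list I i))"

definition block :: "nat \<Rightarrow> nat list \<Rightarrow> nat \<Rightarrow> nat list" where
  "block k L s = take (k div 2) (drop (s * (k div 2)) L)"

definition Idx :: "nat \<Rightarrow> nat \<Rightarrow> (nat \<times> nat) set" where
  "Idx l d = {0..<2*l} \<times> {0..<d}"

definition Ablk :: "nat \<Rightarrow> nat \<Rightarrow> (nat \<Rightarrow> nat list) \<Rightarrow> (nat \<Rightarrow> nat \<Rightarrow> nat) \<Rightarrow> nat \<Rightarrow> nat \<Rightarrow> nat list" where
  "Ablk k l I \<pi> j s = block k (permute_list (\<pi> j) (I j)) s"

definition Bblk :: "nat \<Rightarrow> nat \<Rightarrow> (nat \<Rightarrow> nat list) \<Rightarrow> (nat \<Rightarrow> nat \<Rightarrow> nat) \<Rightarrow> nat \<Rightarrow> nat \<Rightarrow> nat list" where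
  "Bblk k l I \<sigma> j s = block k (permute_list (\<sigma> j) (I ((j + 1) mod (2*l)))) s"

definition par_rel :: "nat \<Rightarrow> nat \<Rightarrow> nat \<Rightarrow> (nat \<Rightarrow> nat list) \<Rightarrow> (nat \<Rightarrow> nat \<Rightarrow> nat)
    \<Rightarrow> (nat \<Rightarrow> nat \<Rightarrow> nat) \<Rightarrow> ((nat \<times> nat) \<times> (nat \<times> nat)) set" where
  "par_rel k l d I \<pi> \<sigma> = {((j,s),(j',s')). (j,s) \<in> Idx l d \<and> (j',s') \<in> Idx l d \<and>
     ((Ablk k l I \<pi> j s, Bblk k l I \<sigma> j s) = (Ablk k l I \<pi> j' s', Bblk k l I \<sigma> j' s') \<or>
      (Ablk k l I \<pi> j s, Bblk k l I \<sigma> j s) = (Bblk k l I \<sigma> j' s', Ablk k l I \<pi> j' s'))}"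

definition Par :: "nat \<Rightarrow> nat \<Rightarrow> nat \<Rightarrow> (nat \<Rightarrow> nat list) \<Rightarrow> (nat \<Rightarrow> nat \<Rightarrow> nat)
    \<Rightarrow> (nat \<Rightarrow> nat \<Rightarrow> nat) \<Rightarrow> (nat \<times> nat) set set" where
  "Par k l d I \<pi> \<sigma> = Idx l d // par_rel k l d I \<pi> \<sigma>"

definition is_partition_of :: "'a set set \<Rightarrow> 'a set \<Rightarrow> bool" where
  "is_partition_of Q A \<longleftrightarrow> \<Union>Q = A \<and> {} \<notin> Q \<and>
     (\<forall>X\<in>Q. \<forall>Y\<in>Q. X \<noteq> Y \<longrightarrow> X \<inter> Y = {})"

definition perm_colls :: "nat \<Rightarrow> nat \<Rightarrow> (nat \<Rightarrow> nat \<Rightarrow> nat) set" where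
  "perm_colls q l = {\<sigma>. (\<forall>j<2*l. \<sigma> j permutes {0..<q}) \<and> (\<forall>j\<ge>2*l. \<sigma> j = id)}"

definition Q_valid :: "nat \<Rightarrow> nat \<Rightarrow> nat \<Rightarrow> (nat \<times> nat) set set \<Rightarrow> (nat \<Rightarrow> nat list) \<Rightarrow> bool" where
  "Q_valid k l d Q I \<longleftrightarrow> (\<exists>\<sigma>\<in>perm_colls (k*d div 2) l. Par k l d I (\<lambda>_. id) \<sigma> = Q)"

end

theory Submission imports Defs begin

lemma stab_card:
  assumes "set xs \<subseteq> {1..n}"
  shows "card {p. p permutes {0..<length xs} \<and> permute_list p xs = xs} \<le> hist_fact n xs"
proof -
  define N where "N = length xs"
  define L where "L v = {i. i < N \<and> xs ! i = v}" for v
  define St where "St = {p. p permutes {0..<N} \<and> permute_list p xs = xs}"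
  define \<Phi> where "\<Phi> p = (\<lambda>v\<in>set xs. (\<lambda>i. if i \<in> L v then p i else i))" for p :: "nat \<Rightarrow> nat"
  define T where "T = PiE (set xs) (\<lambda>v. {r. r permutes L v})"
  have finL: "finite (L v)" for v unfolding L_def by auto
  have stabnth: "xs ! (p i) = xs ! i" if "p \<in> St" "i < N" for p i
  proof -
    have pp: "p permutes {..<length xs}" using that unfolding St_def N_def by (simp add: atLeast0LessThan)
    have "permute_list p xs ! i = xs ! i" using that unfolding St_def by simp
    thus ?thesis using permute_list_nth[OF pp] that N_def by simp
  qed
  have mapsT: "\<Phi> p \<in> T" if pS: "p \<in> St" for p
  proof -
    have pp: "p permutes {0..<N}" using pS unfolding St_def by simp
    have "(\<lambda>i. if i \<in> L v then p i else i) permutes L v" for v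
    proof -
      have sub: "p ` L v \<subseteq> L v"
      proof
        fix x assume "x \<in> p ` L v"
        then obtain i where i: "i \<in> L v" "x = p i" by auto
        have "p i < N" using permutes_in_image[OF pp] i unfolding L_def by auto
        thus "x \<in> L v" using i stabnth[OF pS] unfolding L_def by auto
      qed
      have inj: "inj_on p (L v)" using permutes_inj[OF pp] by (meson inj_on_subset subset_UNIV)
      have "p ` L v = L v" using endo_inj_surj[OF finL sub inj] .
      hence "bij_betw p (L v) (L v)" using inj by (simp add: bij_betw_def)
      hence "bij_betw (\<lambda>i. if i \<in> L v then p i else i) (L v) (L v)"
        by (rule bij_betw_cong[THEN iffD1, rotated]) auto
      thus ?thesis by (rule bij_imp_permutes) auto
    qed
    thus ?thesis unfolding T_def \<Phi>_def by auto
  qed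
  have inj: "inj_on \<Phi> St"
  proof (rule inj_onI)
    fix p1 p2 assume p1: "p1 \<in> St" and p2: "p2 \<in> St" and eq: "\<Phi> p1 = \<Phi> p2"
    show "p1 = p2"
    proof
      fix i
      show "p1 i = p2 i"
      proof (cases "i < N")
        case True
        hence v: "xs ! i \<in> set xs" "i \<in> L (xs ! i)" unfolding N_def L_def by auto
        have "\<Phi> p1 (xs ! i) i = \<Phi> p2 (xs ! i) i" using eq by simp
        thus ?thesis using v unfolding \<Phi>_def by simp
      next
        case False
        have "p1 permutes {0..<N}" "p2 permutes {0..<N}" using p1 p2 unfolding St_def by auto
        thus ?thesis using False by (simp add: permutes_not_in)
      qed
    qed
  qed
  have finT: "finite T" unfolding T_def
    by (rule finite_PiE) (auto intro: finite_permutations finL)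
  have "card St \<le> card T" using card_inj_on_le[OF inj _ finT] mapsT by auto
  also have "card T = (\<Prod>v\<in>set xs. fact (card (L v)))"
    unfolding T_def by (simp add: card_PiE card_permutations finL)
  also have "(\<Prod>v\<in>set xs. fact (card (L v))) = (\<Prod>v\<in>set xs. fact (count_list xs v) :: nat)"
  proof (rule prod.cong[OF refl])
    fix v show "fact (card (L v)) = (fact (count_list xs v) :: nat)"
      unfolding L_def N_def count_list_eq_length_filter length_filter_conv_card by (metis (no_types))
  qed
  also have "(\<Prod>v\<in>set xs. fact (count_list xs v) :: nat) = hist_fact n xs"
    unfolding hist_fact_def
    by (rule prod.mono_neutral_left) (use assms in auto)
  finally show ?thesis unfolding St_def N_def .
qed

lemma fiber_card:
  assumes "set xs \<subseteq> {1..n}"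
  shows "card {p. p permutes {0..<length xs} \<and> permute_list p xs = ys} \<le> hist_fact n xs"
proof (cases "{p. p permutes {0..<length xs} \<and> permute_list p xs = ys} = {}")
  case True show ?thesis by (subst True) simp
next
  case False
  define N where "N = length xs"
  then obtain p0 where p0: "p0 permutes {0..<N}" "permute_list p0 xs = ys" using False by auto
  define F where "F = {p. p permutes {0..<N} \<and> permute_list p xs = ys}"
  define St where "St = {p. p permutes {0..<N} \<and> permute_list p xs = xs}"
  have p0': "p0 permutes {..<length xs}" using p0 N_def by (simp add: atLeast0LessThan)
  have maps: "p \<circ> inv p0 \<in> St" if pF: "p \<in> F" for p
  proof -
    have pp: "p permutes {0..<N}" using pF F_def by simp
    have pp': "p permutes {..<length xs}" using pp N_def by (simp add: atLeast0LessThan)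
    have c: "p \<circ> inv p0 permutes {0..<N}" by (rule permutes_compose[OF permutes_inv[OF p0(1)] pp])
    have c': "p \<circ> inv p0 permutes {..<length xs}" using c N_def by (simp add: atLeast0LessThan)
    have "permute_list (p \<circ> inv p0) xs = xs"
    proof (rule nth_equalityI)
      show "length (permute_list (p \<circ> inv p0) xs) = length xs" by simp
      fix i assume "i < length (permute_list (p \<circ> inv p0) xs)"
      hence i: "i < length xs" by simp
      define i' where "i' = inv p0 i"
      have i': "i' < length xs" using permutes_in_image[OF permutes_inv[OF p0']] i i'_def by auto
      have "permute_list (p \<circ> inv p0) xs ! i = xs ! (p i')"
        using permute_list_nth[OF c' i] i'_def by simp
      also have "\<dots> = permute_list p xs ! i'" using permute_list_nth[OF pp' i'] by simp
      also have "\<dots> = ys ! i'" using pF F_def by simp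
      also have "\<dots> = xs ! (p0 i')" using permute_list_nth[OF p0' i'] p0(2) by simp
      also have "p0 i' = i" unfolding i'_def using permutes_inverses(1)[OF p0'] by simp
      finally show "permute_list (p \<circ> inv p0) xs ! i = xs ! i" .
    qed
    thus ?thesis using c St_def by simp
  qed
  have inj: "inj_on (\<lambda>p. p \<circ> inv p0) F"
  proof (rule inj_onI)
    fix a b assume "a \<circ> inv p0 = b \<circ> inv p0"
    hence "a \<circ> inv p0 \<circ> p0 = b \<circ> inv p0 \<circ> p0" by simp
    thus "a = b" using permutes_inv_o(2)[OF p0(1)] by (simp add: o_assoc[symmetric])
  qed
  have finSt: "finite St" unfolding St_def
    by (rule finite_subset[OF _ finite_permutations[of "{0..<N}"]]) auto
  have "card F \<le> card St" using card_inj_on_le[OF inj _ finSt] maps by auto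
  also have "card St \<le> hist_fact n xs" using stab_card[OF assms] St_def N_def by simp
  finally show ?thesis using F_def N_def by simp
qed

lemma blocks_eq:
  assumes "length xs = (k div 2) * d" "length ys = (k div 2) * d" "k div 2 > 0"
    and "\<forall>s<d. block k xs s = block k ys s"
  shows "xs = ys"
proof (rule nth_equalityI)
  show "length xs = length ys" using assms by simp
  fix i assume i: "i < length xs"
  define m where "m = k div 2"
  define s where "s = i div m"
  define r where "r = i mod m"
  have m0: "m > 0" using assms m_def by simp
  have sd: "s < d" using i assms(1) m0 unfolding s_def m_def
    by (simp add: less_mult_imp_div_less mult.commute)
  have rm: "r < m" using m0 r_def by simp
  have ieq: "i = s * m + r" unfolding s_def r_def by simp
  have "xs ! i = block k xs s ! r"
    unfolding block_def m_def[symmetric] using rm i ieq by (simp add: add.commute)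
  also have "\<dots> = block k ys s ! r" using assms(4) sd by simp
  also have "\<dots> = ys ! i"
    unfolding block_def m_def[symmetric] using rm i ieq assms by (simp add: add.commute)
  finally show "xs ! i = ys ! i" .
qed

lemma pair_det:
  assumes "(a, b1) = (ax, bx) \<or> (a, b1) = (bx, ax)" "(a, b2) = (ax, bx) \<or> (a, b2) = (bx, ax)"
  shows "b1 = b2"
  using assms by auto

lemma par_equiv: "equiv (Idx l d) (par_rel k l d I \<pi> \<sigma>)"
  unfolding equiv_def refl_on_def sym_def trans_def par_rel_def by auto

lemma prod_shift_mod:
  fixes N :: nat assumes "N > 0"
  shows "(\<Prod>j<N. f ((j+1) mod N)) = (\<Prod>j<N. (f j :: nat))"
proof -
  obtain M where N: "N = Suc M" using assms by (cases N) auto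
  have "(\<Prod>j<Suc M. f ((j+1) mod Suc M)) = (\<Prod>j<M. f ((j+1) mod Suc M)) * f 0"
    by (simp add: prod.lessThan_Suc)
  also have "(\<Prod>j<M. f ((j+1) mod Suc M)) = (\<Prod>j<M. f (Suc j))"
    by (rule prod.cong) auto
  also have "(\<Prod>j<M. f (Suc j)) * f 0 = (\<Prod>j<Suc M. f j)"
    by (subst prod.lessThan_Suc_shift) (rule mult.commute)
  finally show ?thesis using N by simp
qed

theorem claim2:
  fixes n d l k :: nat and Q :: "(nat \<times> nat) set set" and I :: "nat \<Rightarrow> nat list"
  assumes "n \<ge> 1" and "d \<ge> 1" and "l \<ge> 1" and "k \<ge> 1" and "even k"
    and "is_partition_of Q (Idx l d)"
    and "\<forall>j<2*l. length (I j) = k*d div 2 \<and> set (I j) \<subseteq> {1..n}"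
    and "Q_valid k l d Q I"
  shows "card {\<sigma>\<in>perm_colls (k*d div 2) l. Par k l d I (\<lambda>_. id) \<sigma> = Q}
           \<le> (k*d div 2) ^ ((k div 2) * card Q) * (\<Prod>j<2*l. hist_fact n (I j))"
proof -
  define q where "q = k*d div 2"
  define m where "m = k div 2"
  have qm: "q = m * d" unfolding q_def m_def using assms(5) by (auto elim: evenE)
  have m0: "m > 0" unfolding m_def using assms(4,5) by (auto elim: evenE)
  define J where "J j = I ((j+1) mod (2*l))" for j
  have Jlen: "length (J j) = q" and Jset: "set (J j) \<subseteq> {1..n}" for j
    using assms(7) assms(3) unfolding J_def q_def by auto
  define S where "S = {\<sigma>\<in>perm_colls q l. Par k l d I (\<lambda>_. id) \<sigma> = Q}"
  define W where "W \<sigma> = (\<lambda>j\<in>{0..<2*l}. permute_list (\<sigma> j) (J j))" for \<sigma> :: "nat \<Rightarrow> nat \<Rightarrow> nat"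
  define B where "B = (\<Prod>j<2*l. hist_fact n (I j))"
  define rep where "rep C = (SOME x. x \<in> C)" for C :: "(nat \<times> nat) set"
  have partQ: "\<Union>Q = Idx l d" "{} \<notin> Q" using assms(6) unfolding is_partition_of_def by auto
  have finIdx: "finite (Idx l d)" unfolding Idx_def by auto
  have finQ: "finite Q" using partQ(1) finIdx by (metis finite_UnionD)
  have repC: "rep C \<in> C" if "C \<in> Q" for C
    using partQ(2) that unfolding rep_def by (metis ex_in_conv someI_ex)
  have repIdx: "rep C \<in> Idx l d" if "C \<in> Q" for C using repC[OF that] partQ(1) that by auto
  define G where "G y = (\<lambda>C\<in>Q. block k (y (fst (rep C))) (snd (rep C)))" for y :: "nat \<Rightarrow> nat list"
  define Tg where "Tg = PiE Q (\<lambda>C. {bs. set bs \<subseteq> set (J (fst (rep C))) \<and> length bs = m})"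
  have Bblk_eq: "Bblk k l I \<sigma> j s = block k (W \<sigma> j) s" if "j < 2*l" for \<sigma> j s
    using that unfolding Bblk_def W_def J_def by simp
  have Gmaps: "G y \<in> Tg" if "y \<in> W ` S" for y
  proof -
    obtain \<sigma> where y: "y = W \<sigma>" and sS: "\<sigma> \<in> S" using \<open>y \<in> W ` S\<close> by auto
    have "block k (y (fst (rep C))) (snd (rep C)) \<in> {bs. set bs \<subseteq> set (J (fst (rep C))) \<and> length bs = m}"
      if C: "C \<in> Q" for C
    proof -
      have r: "fst (rep C) < 2*l" "snd (rep C) < d" using repIdx[OF C] unfolding Idx_def by auto
      have yj: "y (fst (rep C)) = permute_list (\<sigma> (fst (rep C))) (J (fst (rep C)))"
        using r y unfolding W_def by simp
      have len: "length (y (fst (rep C))) = m * d" using yj Jlen qm by simp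
      have "snd (rep C) * m + m \<le> m * d" using r(2) m0
      proof -
        have "Suc (snd (rep C)) \<le> d" using r(2) by simp
        hence "Suc (snd (rep C)) * m \<le> d * m" by (rule mult_le_mono1)
        thus ?thesis by (simp add: mult.commute)
      qed
      hence "length (block k (y (fst (rep C))) (snd (rep C))) = m"
        unfolding block_def m_def[symmetric] using len by simp
      moreover have "set (block k (y (fst (rep C))) (snd (rep C))) \<subseteq> set (J (fst (rep C)))"
      proof -
        have "set (block k (y (fst (rep C))) (snd (rep C))) \<subseteq> set (y (fst (rep C)))"
          unfolding block_def using set_take_subset set_drop_subset by (rule subset_trans)
        moreover have "\<sigma> (fst (rep C)) permutes {..<length (J (fst (rep C)))}"
          using sS r(1) unfolding S_def perm_colls_def by (simp add: Jlen atLeast0LessThan)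
        ultimately show ?thesis using yj by simp
      qed
      ultimately show ?thesis by simp
    qed
    thus ?thesis unfolding Tg_def G_def by auto
  qed
  have finTg: "finite Tg" unfolding Tg_def
    by (rule finite_PiE[OF finQ]) (auto intro: finite_lists_length_eq)
  have Ginj: "inj_on G (W ` S)"
  proof (rule inj_onI)
    fix y1 y2 assume y1: "y1 \<in> W ` S" and y2: "y2 \<in> W ` S" and eq: "G y1 = G y2"
    obtain \<sigma>1 where s1: "\<sigma>1 \<in> S" "y1 = W \<sigma>1" using y1 by auto
    obtain \<sigma>2 where s2: "\<sigma>2 \<in> S" "y2 = W \<sigma>2" using y2 by auto
    have blk: "block k (y1 j) s = block k (y2 j) s" if js: "j < 2*l" "s < d" for j s
    proof -
      have jsI: "(j,s) \<in> Idx l d" using js unfolding Idx_def by auto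
      then obtain C where C: "C \<in> Q" "(j,s) \<in> C" using partQ(1) by auto
      let ?x = "rep C"
      have xC: "?x \<in> C" using repC[OF C(1)] .
      have xI: "fst ?x < 2*l" using repIdx[OF C(1)] unfolding Idx_def by auto
      have Q1: "C \<in> Idx l d // par_rel k l d I (\<lambda>_. id) \<sigma>1"
        using s1 C unfolding S_def Par_def by auto
      have Q2: "C \<in> Idx l d // par_rel k l d I (\<lambda>_. id) \<sigma>2"
        using s2 C unfolding S_def Par_def by auto
      have R1: "(?x, (j,s)) \<in> par_rel k l d I (\<lambda>_. id) \<sigma>1"
        using in_quotient_imp_in_rel[OF par_equiv Q1] xC C(2) by auto
      have R2: "(?x, (j,s)) \<in> par_rel k l d I (\<lambda>_. id) \<sigma>2"
        using in_quotient_imp_in_rel[OF par_equiv Q2] xC C(2) by auto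
      have bx: "Bblk k l I \<sigma>1 (fst ?x) (snd ?x) = Bblk k l I \<sigma>2 (fst ?x) (snd ?x)"
        using fun_cong[OF eq, of C] C(1) xI s1(2) s2(2) Bblk_eq unfolding G_def by simp
      have "Bblk k l I \<sigma>1 j s = Bblk k l I \<sigma>2 j s"
      proof -
        obtain j0 s0 where x: "?x = (j0, s0)" by (cases ?x)
        have r1: "(Ablk k l I (\<lambda>_. id) j s, Bblk k l I \<sigma>1 j s) = (Ablk k l I (\<lambda>_. id) j0 s0, Bblk k l I \<sigma>1 j0 s0)
            \<or> (Ablk k l I (\<lambda>_. id) j s, Bblk k l I \<sigma>1 j s) = (Bblk k l I \<sigma>1 j0 s0, Ablk k l I (\<lambda>_. id) j0 s0)"
          using R1 x unfolding par_rel_def by auto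
        have r2: "(Ablk k l I (\<lambda>_. id) j s, Bblk k l I \<sigma>2 j s) = (Ablk k l I (\<lambda>_. id) j0 s0, Bblk k l I \<sigma>1 j0 s0)
            \<or> (Ablk k l I (\<lambda>_. id) j s, Bblk k l I \<sigma>2 j s) = (Bblk k l I \<sigma>1 j0 s0, Ablk k l I (\<lambda>_. id) j0 s0)"
          using R2 x bx unfolding par_rel_def by auto
        show ?thesis by (rule pair_det[OF r1 r2])
      qed
      thus ?thesis using Bblk_eq js s1(2) s2(2) by simp
    qed
    show "y1 = y2"
    proof
      fix j show "y1 j = y2 j"
      proof (cases "j < 2*l")
        case True
        show ?thesis
        proof (rule blocks_eq[of _ k d])
          show "length (y1 j) = k div 2 * d" "length (y2 j) = k div 2 * d"
            using s1(2) s2(2) True Jlen qm m_def unfolding W_def by auto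
          show "k div 2 > 0" using m0 m_def by simp
          show "\<forall>s<d. block k (y1 j) s = block k (y2 j) s" using blk True by auto
        qed
      next
        case False thus ?thesis using s1(2) s2(2) unfolding W_def by simp
      qed
    qed
  qed
  have finWS: "finite (W ` S)"
  proof -
    have "G ` (W ` S) \<subseteq> Tg" using Gmaps by blast
    hence "finite (G ` (W ` S))" using finTg by (rule finite_subset)
    thus ?thesis using Ginj by (rule finite_imageD)
  qed
  have "card (W ` S) \<le> card Tg" using card_inj_on_le[OF Ginj _ finTg] Gmaps by auto
  also have "card Tg = (\<Prod>C\<in>Q. card (set (J (fst (rep C)))) ^ m)"
    unfolding Tg_def by (simp add: card_PiE finQ card_lists_length_eq)
  also have "\<dots> \<le> (\<Prod>C\<in>Q. q ^ m)"
  proof (rule prod_mono)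
    fix C assume "C \<in> Q"
    have "card (set (J (fst (rep C)))) \<le> q" using card_length[of "J (fst (rep C))"] Jlen by simp
    thus "0 \<le> card (set (J (fst (rep C)))) ^ m \<and> card (set (J (fst (rep C)))) ^ m \<le> q ^ m"
      by (simp add: power_mono)
  qed
  also have "\<dots> = q ^ (m * card Q)" by (simp add: power_mult)
  finally have imgb: "card (W ` S) \<le> q ^ (m * card Q)" .
  have fib: "card {\<sigma>\<in>S. W \<sigma> = y} \<le> B" for y
  proof -
    define F where "F j = {p. p permutes {0..<length (J j)} \<and> permute_list p (J j) = y j}" for j
    have finF: "finite (F j)" for j unfolding F_def
      by (rule finite_subset[OF _ finite_permutations[of "{0..<length (J j)}"]]) auto
    have inj: "inj_on (\<lambda>\<sigma>. restrict \<sigma> {0..<2*l}) {\<sigma>\<in>S. W \<sigma> = y}"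
    proof (rule inj_onI)
      fix a b assume a: "a \<in> {\<sigma>\<in>S. W \<sigma> = y}" and b: "b \<in> {\<sigma>\<in>S. W \<sigma> = y}"
        and e: "restrict a {0..<2*l} = restrict b {0..<2*l}"
      show "a = b"
      proof
        fix j show "a j = b j"
        proof (cases "j < 2*l")
          case True thus ?thesis using fun_cong[OF e, of j] by simp
        next
          case False thus ?thesis using a b unfolding S_def perm_colls_def by auto
        qed
      qed
    qed
    have maps: "restrict \<sigma> {0..<2*l} \<in> PiE {0..<2*l} F" if "\<sigma> \<in> {\<sigma>\<in>S. W \<sigma> = y}" for \<sigma>
      using that unfolding F_def S_def perm_colls_def W_def by (auto simp: Jlen)
    have "card {\<sigma>\<in>S. W \<sigma> = y} \<le> card (PiE {0..<2*l} F)"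
    proof (rule card_inj_on_le[OF inj])
      show "(\<lambda>\<sigma>. restrict \<sigma> {0..<2*l}) ` {\<sigma>\<in>S. W \<sigma> = y} \<subseteq> PiE {0..<2*l} F"
        using maps by blast
      show "finite (PiE {0..<2*l} F)" by (rule finite_PiE) (auto simp: finF)
    qed
    also have "\<dots> = (\<Prod>j\<in>{0..<2*l}. card (F j))" by (simp add: card_PiE)
    also have "\<dots> \<le> (\<Prod>j\<in>{0..<2*l}. hist_fact n (J j))"
      by (rule prod_mono) (auto simp: F_def intro: fiber_card[OF Jset])
    also have "\<dots> = B" unfolding B_def J_def atLeast0LessThan
      by (rule prod_shift_mod) (use assms(3) in simp)
    finally show ?thesis .
  qed
  have Seq: "S = (\<Union>y\<in>W ` S. {\<sigma>\<in>S. W \<sigma> = y})" by auto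
  have "card S \<le> (\<Sum>y\<in>W ` S. card {\<sigma>\<in>S. W \<sigma> = y})"
    by (subst Seq) (rule card_UN_le[OF finWS])
  also have "\<dots> \<le> card (W ` S) * B"
    using sum_bounded_above[of "W ` S" "\<lambda>y. card {\<sigma>\<in>S. W \<sigma> = y}" B] fib by simp
  also have "\<dots> \<le> q ^ (m * card Q) * B" using imgb by simp
  finally show ?thesis unfolding S_def B_def q_def m_def .
qed

end
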